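(* Let $K, M, N, L$ be positive integers, let $M_{\mathrm{tot}} = KM$, and let $\sigma^2>0$. For each $n \in \{1,\dots,N\}$ let $\epsilon_n\in(0,1)$ and let $\mathbf{R}_n=\mathrm{bdiag}(\rho_{1n}\mathbf{I}_M,\dots,\rho_{Kn}\mathbf{I}_M)$ with real numbers $\rho_{kn}\ge 0$. Let $\mathbf{x}_n = a_n\mathbf{h}_n$ with $a_n\sim\mathrm{Bernoulli}(\epsilon_n)$ and $\mathbf{h}_n\sim\mathcal{CN}(\mathbf{0},\mathbf{R}_n)$ independent. Define the state evolution with the MMSE denoiser as follows: $$\bm{\Sigma}^0=\sigma^2\mathbf{I}+\frac{1}{L}\sum_{n=1}^N \mathbf{R}_n,$$ and for $t\ge 0$, $$\bm{\Sigma}^{t+1}=\sigma^2\mathbf{I}+\frac{1}{L}\sum_{n=1}^N\mathbb{E}\Big[\big(\mathbf{g}_{t,n}(\mathbf{x}_n+\mathbf{v}^t)-\mathbf{x}_n\big)\big(\mathbf{g}_{t,n}(\mathbf{x}_n+\mathbf{v}^t)-\mathbf{x}_n\big)^H\Big],$$ where $\mathbf{v}^t\sim\mathcal{CN}(\mathbf{0},\bm{\Sigma}^t)$ is independent of $\mathbf{x}_n$, and $\mathbf{g}_{t,n}(\bm{\xi})=\mathbb{E}[\mathbf{x}_n\mid \mathbf{x}_n+\mathbf{v}^t=\bm{\xi}]$ is the MMSE denoiser, explicitly $$\mathbf{g}_{t,n}(\bm{\xi})=\Big(1+\tfrac{1-\epsilon_n}{\epsilon_n}\tfrac{|\mathbf{R}_n+\bm{\Sigma}^t|}{|\bm{\Sigma}^t|}\exp\big(-\bm{\xi}^H\bm{\Omega}_n^t\bm{\xi}\big)\Big)^{-1}\mathbf{R}_n(\mathbf{R}_n+\bm{\Sigma}^t)^{-1}\bm{\xi},\qquad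 \bm{\Omega}_n^t=(\bm{\Sigma}^t)^{-1}-(\mathbf{R}_n+\bm{\Sigma}^t)^{-1},$$ with $|\cdot|$ denoting the determinant. Then for every $t\ge0$ there exist real numbers $\tau^t_1,\dots,\tau^t_K$ such that $\bm{\Sigma}^t=\mathrm{bdiag}(\tau^t_1\mathbf{I}_M,\dots,\tau^t_K\mathbf{I}_M)$.
   Context: $\mathrm{bdiag}(\mathbf{A}_1,\dots,\mathbf{A}_K)$ denotes the block-diagonal matrix with diagonal blocks $\mathbf{A}_1,\dots,\mathbf{A}_K$; $\mathbf{I}_M$ is the $M\times M$ identity. $\mathcal{CN}(\mathbf{0},\mathbf{C})$ denotes the circularly-symmetric complex Gaussian distribution with covariance $\mathbf{C}$. The expectation in the state evolution is over the joint distribution of $\mathbf{x}_n$ and $\mathbf{v}^t$; $(\cdot)^H$ is the conjugate transpose. *)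

theory Defs
  imports "HOL-Probability.Probability"
begin

text \<open>Block-diagonal matrix bdiag(c_1 I_M, ..., c_K I_M); coordinates of C^(KM) are
  indexed by pairs (k,m), k ranging over the K blocks and m over the M entries of a block.\<close>
definition bdiag :: "('k::finite \<Rightarrow> complex) \<Rightarrow> complex^('k \<times> 'm::finite)^('k \<times> 'm)" where
  "bdiag c = (\<chi> i j. if i = j then c (fst i) else 0)"

text \<open>Conjugate transpose.\<close>
definition mat_H :: "complex^'n::finite^'m::finite \<Rightarrow> complex^'m^'n" where
  "mat_H A = (\<chi> i j. cnj (A $ j $ i))"

text \<open>Outer product e e^H.\<close>
definition outer :: "complex^'n::finite \<Rightarrow> complex^'n^'n" where
  "outer e = (\<chi> i j. e $ i * cnj (e $ j))"

text \<open>Standard circularly-symmetric complex Gaussian CN(0, I) on C^n.\<close>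
definition std_cgauss :: "(complex^'i::finite) measure" where
  "std_cgauss = density lborel (\<lambda>x. ennreal (exp (- (norm x)\<^sup>2) / pi ^ CARD('i)))"

text \<open>CN(0, C): law of A z with z ~ CN(0,I) and A A^H = C (this law depends only on C).\<close>
definition cgauss :: "complex^'i^'i \<Rightarrow> (complex^'i::finite) measure" where
  "cgauss C = distr std_cgauss borel (\<lambda>z. (SOME A :: complex^'i^'i. A ** mat_H A = C) *v z)"

text \<open>Law of x = a h with a ~ Bernoulli(eps), h ~ CN(0,R) independent.\<close>
definition bg_prior :: "real \<Rightarrow> complex^'i^'i \<Rightarrow> (complex^'i::finite) measure" where
  "bg_prior eps R = distr (measure_pmf (bernoulli_pmf eps) \<Otimes>\<^sub>M cgauss R) borel
      (\<lambda>(a, h). if a then h else 0)"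

text \<open>Explicit MMSE denoiser g(xi) for prior bg_prior eps R and noise covariance S.\<close>
definition mmse_den :: "real \<Rightarrow> complex^'i^'i \<Rightarrow> complex^'i^'i \<Rightarrow> complex^'i \<Rightarrow> complex^'i::finite" where
  "mmse_den eps R S xi =
     (let Om = matrix_inv S - matrix_inv (R + S);
          q = (\<Sum>i\<in>UNIV. cnj (xi $ i) * (Om *v xi) $ i)
      in inverse (1 + complex_of_real ((1 - eps) / eps) * (det (R + S) / det S) * exp (- q))
         *s ((R ** matrix_inv (R + S)) *v xi))"

text \<open>State evolution Sigma^t.\<close>
primrec SE :: "real \<Rightarrow> nat \<Rightarrow> nat \<Rightarrow> (nat \<Rightarrow> real) \<Rightarrow> (nat \<Rightarrow> complex^'i^'i) \<Rightarrow> nat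
               \<Rightarrow> complex^'i::finite^'i" where
  "SE s2 L N eps R 0 = s2 *\<^sub>R mat 1 + (1 / real L) *\<^sub>R (\<Sum>n\<in>{1..N}. R n)"
| "SE s2 L N eps R (Suc t) =
     (let S = SE s2 L N eps R t in
      s2 *\<^sub>R mat 1 + (1 / real L) *\<^sub>R
        (\<Sum>n\<in>{1..N}. \<integral>p. outer (mmse_den (eps n) (R n) S (fst p + snd p) - fst p)
                         \<partial>(bg_prior (eps n) (R n) \<Otimes>\<^sub>M cgauss S)))"

end

theory Submission
  imports Defs "HOL-Analysis.Analysis"
begin

(* ---- part P1 ---- *)
lemma lborel_orth_cart:
  fixes f :: "real^'n::{finite,wellorder} \<Rightarrow> real^'n::_"
  assumes f: "orthogonal_transformation f"
  shows "distr lborel borel f = lborel"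
proof (rule lborel_eqI[symmetric])
  have lin: "linear f" using f by (simp add: orthogonal_transformation_linear)
  have fm: "f \<in> borel_measurable borel"
    using lin by (intro borel_measurable_continuous_onI linear_continuous_on linear_conv_bounded_linear[THEN iffD1])
  define g where "g = inv f"
  have g: "orthogonal_transformation g" unfolding g_def using f by (rule orthogonal_transformation_inv)
  have bij: "bij f" using f by (rule orthogonal_transformation_bij)
  have pre: "f -` S = g ` S" for S
    unfolding g_def using bij by (simp add: bij_vimage_eq_inv_image)
  fix l u :: "real^'n::{finite,wellorder}"
  assume "\<And>b. b \<in> Basis \<Longrightarrow> l \<bullet> b \<le> u \<bullet> b"
  have gm: "g ` box l u \<in> lmeasurable"
    by (rule measurable_orthogonal_image[OF g]) simp
  have gb: "g ` box l u \<in> sets borel"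
    using measurable_sets_borel[OF fm, of "box l u"] by (simp add: pre[symmetric])
  have "emeasure (distr lborel borel f) (box l u) = emeasure lborel (g ` box l u)"
    using fm by (simp add: emeasure_distr pre)
  also have "\<dots> = emeasure lebesgue (g ` box l u)"
    using gb by (simp add: emeasure_completion)
  also have "\<dots> = ennreal (measure lebesgue (g ` box l u))"
    using gm by (simp add: emeasure_eq_measure2)
  also have "\<dots> = ennreal (measure lebesgue (box l u))"
    using measure_orthogonal_image[OF g, of "box l u"] by simp
  also have "\<dots> = emeasure lborel (box l u)"
    by (simp add: emeasure_eq_measure2 emeasure_completion[symmetric])
  finally show "emeasure (distr lborel borel f) (box l u) = (\<Prod>b\<in>Basis. (u - l) \<bullet> b)"
    using \<open>\<And>b. b \<in> Basis \<Longrightarrow> l \<bullet> b \<le> u \<bullet> b\<close> by (simp add: emeasure_lborel_box_eq)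
qed simp

(* ---- part P2 ---- *)
typedef (overloaded) ('a::euclidean_space) bidx = "Basis :: 'a set"
  using nonempty_Basis by blast

instance bidx :: (euclidean_space) finite
proof
  have "(UNIV :: 'a bidx set) = Abs_bidx ` Basis"
    using type_definition.Abs_image[OF type_definition_bidx] by metis
  then show "finite (UNIV :: 'a bidx set)" by (metis finite_Basis finite_imageI)
qed

definition bidx_rank :: "('a::euclidean_space) bidx \<Rightarrow> nat" where
  "bidx_rank = (SOME f. inj f)"

lemma inj_bidx_rank: "inj bidx_rank"
proof -
  have "\<exists>f :: 'a bidx \<Rightarrow> nat. inj f"
    using finite_imp_inj_to_nat_seg[of "UNIV :: 'a bidx set"] by auto
  then show ?thesis unfolding bidx_rank_def by (rule someI_ex)
qed

instantiation bidx :: (euclidean_space) wellorder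
begin
definition less_eq_bidx :: "'a bidx \<Rightarrow> 'a bidx \<Rightarrow> bool" where "less_eq_bidx x y = (bidx_rank x \<le> bidx_rank y)"
definition less_bidx :: "'a bidx \<Rightarrow> 'a bidx \<Rightarrow> bool" where "less_bidx x y = (bidx_rank x < bidx_rank y)"
instance
proof
  fix P :: "'a bidx \<Rightarrow> bool" and a :: "'a bidx"
  assume h: "\<And>x. (\<And>y. y < x \<Longrightarrow> P y) \<Longrightarrow> P x"
  show "P a"
  proof (induction "bidx_rank a" arbitrary: a rule: less_induct)
    case less then show ?case using h by (auto simp: less_bidx_def)
  qed
qed (use inj_bidx_rank in \<open>auto simp: less_eq_bidx_def less_bidx_def dest: injD\<close>)
end

definition bphi :: "'a::euclidean_space \<Rightarrow> real^('a bidx)" where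
  "bphi x = (\<chi> i. x \<bullet> Rep_bidx i)"
definition bpsi :: "real^('a::euclidean_space bidx) \<Rightarrow> 'a" where
  "bpsi y = (\<Sum>i\<in>UNIV. (y $ i) *\<^sub>R Rep_bidx i)"

lemma sum_bidx: "(\<Sum>i\<in>UNIV. f (Rep_bidx i)) = (\<Sum>b\<in>(Basis::'a::euclidean_space set). f b)"
proof -
  have "bij_betw Rep_bidx (UNIV :: 'a bidx set) Basis"
    by (metis bij_betw_def inj_on_def type_definition.Rep_inject type_definition.Rep_range type_definition_bidx)
  then show ?thesis by (rule sum.reindex_bij_betw)
qed

lemma prod_bidx: "(\<Prod>i\<in>UNIV. f (Rep_bidx i)) = (\<Prod>b\<in>(Basis::'a::euclidean_space set). f b)"
proof -
  have "bij_betw Rep_bidx (UNIV :: 'a bidx set) Basis"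
    by (metis bij_betw_def inj_on_def type_definition.Rep_inject type_definition.Rep_range type_definition_bidx)
  then show ?thesis by (rule prod.reindex_bij_betw)
qed

lemma psi_phi: "bpsi (bphi x) = x"
  unfolding bpsi_def bphi_def using sum_bidx[of "\<lambda>b. (x \<bullet> b) *\<^sub>R b"] by (simp add: euclidean_representation)

lemma psi_inner: "b \<in> Basis \<Longrightarrow> bpsi y \<bullet> b = y $ Abs_bidx b"
proof -
  assume b: "b \<in> Basis"
  have "bpsi y \<bullet> b = (\<Sum>i\<in>UNIV. y $ i * (Rep_bidx i \<bullet> b))"
    unfolding bpsi_def by (simp add: inner_sum_left)
  also have "\<dots> = (\<Sum>i\<in>UNIV. if i = Abs_bidx b then y $ i else 0)"
  proof (rule sum.cong[OF refl])
    fix i :: "'a bidx"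
    have "Rep_bidx i \<in> Basis" using Rep_bidx by blast
    moreover have "(Rep_bidx i = b) = (i = Abs_bidx b)"
      using b by (metis Abs_bidx_inverse Rep_bidx_inverse)
    ultimately show "y $ i * (Rep_bidx i \<bullet> b) = (if i = Abs_bidx b then y $ i else 0)"
      using b by (auto simp: inner_Basis)
  qed
  also have "\<dots> = y $ Abs_bidx b" by simp
  finally show ?thesis .
qed

lemma phi_psi: "bphi (bpsi y) = y"
  unfolding bphi_def by (simp add: vec_eq_iff psi_inner Rep_bidx Rep_bidx_inverse)

lemma linear_phi: "linear bphi"
  unfolding bphi_def by (auto simp: linear_iff vec_eq_iff inner_add_left)

lemma linear_psi: "linear bpsi"
  unfolding bpsi_def by (auto simp: linear_iff scaleR_add_left sum.distrib scaleR_sum_right)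

lemma norm_phi: "norm (bphi x) = norm x"
proof -
  have "(norm (bphi x))\<^sup>2 = (\<Sum>i\<in>UNIV. (x \<bullet> Rep_bidx i)\<^sup>2)"
    unfolding bphi_def norm_vec_def L2_set_def by (simp add: sum_nonneg)
  also have "\<dots> = (\<Sum>b\<in>Basis. (x \<bullet> b)\<^sup>2)" by (rule sum_bidx)
  also have "\<dots> = x \<bullet> x"
    by (simp add: euclidean_inner[of x x] power2_eq_square)
  also have "\<dots> = (norm x)\<^sup>2"
    by (simp add: power2_norm_eq_inner)
  finally show ?thesis by simp
qed

lemma meas_lin: "linear f \<Longrightarrow> f \<in> borel_measurable borel" for f :: "'a::euclidean_space \<Rightarrow> 'b::euclidean_space"
  by (intro borel_measurable_continuous_onI linear_continuous_on linear_conv_bounded_linear[THEN iffD1])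

lemma distr_phi: "distr lborel borel (bphi :: 'a::euclidean_space \<Rightarrow> _) = lborel"
proof (rule lborel_eqI[symmetric])
  fix l u :: "real^('a bidx)"
  assume le: "\<And>b. b \<in> Basis \<Longrightarrow> l \<bullet> b \<le> u \<bullet> b"
  have pre: "bphi -` box l u = box (bpsi l) (bpsi u)"
  proof -
    have "bphi x \<in> box l u \<longleftrightarrow> x \<in> box (bpsi l) (bpsi u)" for x
    proof -
      have "bphi x \<in> box l u \<longleftrightarrow> (\<forall>i. l $ i < x \<bullet> Rep_bidx i \<and> x \<bullet> Rep_bidx i < u $ i)"
        by (simp add: mem_box_cart bphi_def)
      also have "\<dots> \<longleftrightarrow> (\<forall>b\<in>Basis. l $ Abs_bidx b < x \<bullet> b \<and> x \<bullet> b < u $ Abs_bidx b)"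
        by (metis Abs_bidx_inverse Rep_bidx Rep_bidx_inverse)
      also have "\<dots> \<longleftrightarrow> x \<in> box (bpsi l) (bpsi u)"
        by (simp add: mem_box psi_inner)
      finally show ?thesis .
    qed
    then show ?thesis by auto
  qed
  have le2: "\<And>b. b \<in> Basis \<Longrightarrow> bpsi l \<bullet> b \<le> bpsi u \<bullet> b"
  proof -
    fix b :: 'a assume b: "b \<in> Basis"
    have "axis (Abs_bidx b) (1::real) \<in> Basis" by simp
    from le[OF this] show "bpsi l \<bullet> b \<le> bpsi u \<bullet> b"
      using b by (simp add: psi_inner cart_eq_inner_axis)
  qed
  have "emeasure (distr lborel borel bphi) (box l u) = emeasure lborel (box (bpsi l) (bpsi u))"
  proof -
    have m: "bphi \<in> measurable lborel borel" using meas_lin[OF linear_phi] by simp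
    show ?thesis using emeasure_distr[OF m, of "box l u"] by (simp add: pre)
  qed
  also have "\<dots> = (\<Prod>b\<in>Basis. (bpsi u - bpsi l) \<bullet> b)"
    using le2 by (simp add: emeasure_lborel_box_eq)
  also have "\<dots> = (\<Prod>i\<in>UNIV. u $ i - l $ i)"
  proof -
    have "(\<Prod>b\<in>Basis. u $ Abs_bidx b - l $ Abs_bidx b) = (\<Prod>i\<in>UNIV. u $ i - l $ i)"
      using prod_bidx[of "\<lambda>b. u $ Abs_bidx b - l $ Abs_bidx b", symmetric] by (simp add: Rep_bidx_inverse)
    then show ?thesis by (simp add: inner_diff_left psi_inner)
  qed
  also have "\<dots> = (\<Prod>b\<in>Basis. (u - l) \<bullet> b)"
  proof -
    have B: "(Basis :: (real^('a bidx)) set) = (\<lambda>i. axis i 1) ` UNIV"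
      by (auto simp: Basis_vec_def)
    have inj: "inj (\<lambda>i::'a bidx. axis i (1::real))"
      by (auto simp: inj_def axis_eq_axis)
    show ?thesis unfolding B prod.reindex[OF inj]
      by (simp add: inner_axis)
  qed
  finally show "emeasure (distr lborel borel bphi) (box l u) = (\<Prod>b\<in>Basis. (u - l) \<bullet> b)" .
qed simp

(* ---- part P3 ---- *)
lemma lborel_psi: "distr lborel borel (bpsi :: real^('a::euclidean_space bidx) \<Rightarrow> 'a) = lborel"
proof -
  have "distr lborel borel (bpsi :: real^('a bidx) \<Rightarrow> 'a) = distr (distr lborel borel (bphi :: 'a \<Rightarrow> _)) borel bpsi"
    by (simp add: distr_phi)
  also have "\<dots> = distr lborel borel (bpsi \<circ> bphi)"
    by (rule distr_distr) (simp_all add: meas_lin linear_psi linear_phi)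
  also have "bpsi \<circ> bphi = (\<lambda>x::'a. x)" by (simp add: fun_eq_iff psi_phi)
  finally show ?thesis by (simp add: distr_id2)
qed

lemma norm_psi: "norm (bpsi y) = norm y"
  by (metis norm_phi phi_psi)

lemma lborel_orth:
  fixes Q :: "'a::euclidean_space \<Rightarrow> 'a"
  assumes Q: "orthogonal_transformation Q"
  shows "distr lborel borel Q = lborel"
proof -
  define f where "f = bphi \<circ> Q \<circ> (bpsi :: real^('a bidx) \<Rightarrow> 'a)"
  have "orthogonal_transformation f"
    unfolding f_def orthogonal_transformation using Q
    by (auto simp: orthogonal_transformation norm_phi norm_psi linear_phi linear_psi psi_phi phi_psi
        intro!: linear_compose)
  then have f: "distr lborel borel f = lborel" by (rule lborel_orth_cart)
  have mQ: "Q \<in> borel_measurable borel" using Q by (simp add: meas_lin orthogonal_transformation_linear)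
  have mf: "f \<in> borel_measurable borel" using \<open>orthogonal_transformation f\<close> by (simp add: meas_lin orthogonal_transformation_linear)
  have "distr lborel borel Q = distr (distr lborel borel bpsi) borel Q" by (simp add: lborel_psi)
  also have "\<dots> = distr lborel borel (Q \<circ> bpsi)"
    by (rule distr_distr) (simp_all add: meas_lin linear_psi mQ)
  also have "Q \<circ> bpsi = bpsi \<circ> f" by (simp add: f_def fun_eq_iff psi_phi)
  also have "distr lborel borel (bpsi \<circ> f) = distr (distr lborel borel f) borel bpsi"
    by (rule distr_distr[symmetric]) (simp_all add: meas_lin linear_psi mf)
  also have "\<dots> = lborel" by (simp add: f lborel_psi)
  finally show ?thesis .
qed

(* ---- part P4 ---- *)
definition cdot :: "complex^'i::finite \<Rightarrow> complex^'i \<Rightarrow> complex" where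
  "cdot x y = (\<Sum>k\<in>UNIV. cnj (x $ k) * y $ k)"

definition hh :: "complex^'i::finite \<Rightarrow> complex^'i \<Rightarrow> complex^'i" where
  "hh c x = x - ((2 / cdot c c) * cdot c x) *s c"

lemma cdot_add_right: "cdot x (y + z) = cdot x y + cdot x z"
  by (simp add: cdot_def algebra_simps sum.distrib)
lemma cdot_diff_right: "cdot x (y - z) = cdot x y - cdot x z"
  by (simp add: cdot_def algebra_simps sum_subtractf)
lemma cdot_diff_left: "cdot (x - y) z = cdot x z - cdot y z"
  by (simp add: cdot_def algebra_simps sum_subtractf)
lemma cdot_smult_right: "cdot x (a *s y) = a * cdot x y"
  by (simp add: cdot_def algebra_simps sum_distrib_left)
lemma cdot_smult_left: "cdot (a *s x) y = cnj a * cdot x y"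
  by (simp add: cdot_def algebra_simps sum_distrib_left)
lemma cdot_scaleR_right: "cdot x (r *\<^sub>R y) = of_real r * cdot x y"
  unfolding cdot_def vector_scaleR_component
  by (simp add: scaleR_conv_of_real sum_distrib_left algebra_simps)
lemma cdot_cnj: "cdot y x = cnj (cdot x y)"
  by (simp add: cdot_def mult.commute)
lemma cdot_self: "cdot x x = of_real ((norm x)\<^sup>2)"
proof -
  have "cdot x x = (\<Sum>k\<in>UNIV. of_real ((cmod (x $ k))\<^sup>2))"
    unfolding cdot_def by (rule sum.cong) (simp_all add: complex_norm_square[symmetric] mult.commute)
  also have "\<dots> = of_real ((norm x)\<^sup>2)"
    by (simp add: norm_vec_def L2_set_def sum_nonneg)
  finally show ?thesis .
qed
lemma cdot_self_eq0: "cdot x x = 0 \<longleftrightarrow> x = 0"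
  by (simp add: cdot_self)

lemma hh_add: "hh c (x + y) = hh c x + hh c y"
  unfolding hh_def cdot_add_right by (simp add: vec_eq_iff algebra_simps add_divide_distrib)

lemma hh_scaleR: "hh c (r *\<^sub>R x) = r *\<^sub>R hh c x"
proof -
  have "hh c (r *\<^sub>R x) = r *\<^sub>R x - (of_real r * (2 / cdot c c * cdot c x)) *s c"
    unfolding hh_def cdot_scaleR_right by (simp add: algebra_simps)
  also have "\<dots> = r *\<^sub>R hh c x"
    unfolding hh_def vec_eq_iff vector_scaleR_component vector_minus_component vector_smult_component
    by (simp add: scaleR_conv_of_real algebra_simps)
  finally show ?thesis .
qed

lemma linear_hh: "linear (hh c)"
  by (rule linearI) (simp_all add: hh_add hh_scaleR)

lemma cdot_hh: "cdot (hh c x) (hh c x) = cdot x x"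
proof (cases "cdot c c = 0")
  case True then show ?thesis by (simp add: hh_def)
next
  case False
  define g where "g = cdot c x"
  have xc: "cdot x c = cnj g" unfolding g_def by (rule cdot_cnj)
  obtain r where r: "cdot c c = of_real r" using cdot_self by blast
  have r0: "(of_real r :: complex) \<noteq> 0" using False r by simp
  have cr: "cnj (2 / cdot c c * g) = 2 / cdot c c * cnj g" by (simp add: r)
  have "cdot (hh c x) (hh c x) = cdot x x - (2 / of_real r * g) * cnj g - (2 / of_real r * cnj g) * g
     + (2 / of_real r * cnj g) * (2 / of_real r * g) * of_real r"
    unfolding hh_def cdot_diff_left cdot_diff_right cdot_smult_left cdot_smult_right xc cr
    by (simp add: r g_def[symmetric] algebra_simps)
  also have "\<dots> = cdot x x" using r0 by (simp add: field_simps power2_eq_square)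
  finally show ?thesis .
qed

lemma orth_hh: "orthogonal_transformation (hh c)"
proof -
  have "norm (hh c x) = norm x" for x
    using cdot_hh[of c x] unfolding cdot_self of_real_eq_iff by (metis norm_ge_zero power2_eq_iff_nonneg)
  then show ?thesis by (simp add: orthogonal_transformation linear_hh)
qed

(* ---- part P5 ---- *)
lemma meas_std: "f \<in> borel_measurable borel \<Longrightarrow> f \<in> measurable std_cgauss borel"
  unfolding std_cgauss_def by simp

lemma std_cgauss_orth:
  fixes W :: "complex^'i::finite \<Rightarrow> complex^'i"
  assumes W: "orthogonal_transformation W"
  shows "distr std_cgauss borel W = std_cgauss"
proof -
  define g where "g = (\<lambda>x::complex^'i. ennreal (exp (- (norm x)\<^sup>2) / pi ^ CARD('i)))"
  have mW: "W \<in> borel_measurable borel" using W by (simp add: meas_lin orthogonal_transformation_linear)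
  then have mW': "W \<in> measurable lborel borel" by simp
  have gm: "g \<in> borel_measurable borel" unfolding g_def by measurable
  have gW: "(\<lambda>x. g (W x)) = g" using W by (simp add: g_def orthogonal_transformation fun_eq_iff)
  have "density (distr lborel borel W) g = distr (density lborel (\<lambda>x. g (W x))) borel W"
    by (rule density_distr[OF gm mW'])
  then have "density lborel g = distr (density lborel g) borel W"
    by (simp add: lborel_orth[OF W] gW)
  then show ?thesis unfolding std_cgauss_def g_def by simp
qed

lemma integrable_gauss1: "integrable lborel (\<lambda>t::real. exp (- t\<^sup>2))"
proof -
  have eq: "exp (- t\<^sup>2) = sqrt pi * normal_density 0 (sqrt (1/2)) t" for t :: real
    by (simp add: normal_density_def real_sqrt_mult)
  show ?thesis unfolding eq by simp
qed

lemma finite_std_cgauss: "finite_measure (std_cgauss :: (complex^'i::finite) measure)"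
proof
  define h where "h = (\<lambda>b::complex^'i. \<lambda>t::real. ennreal (exp (- t\<^sup>2)))"
  have fin1: "(\<integral>\<^sup>+t. h b t \<partial>lborel) < \<infinity>" for b
    using integrableD(2)[OF integrable_gauss1] by (simp add: h_def less_top)
  have eq: "ennreal (exp (- (norm x)\<^sup>2) / pi ^ CARD('i)) = ennreal (1 / pi ^ CARD('i)) * (\<Prod>b\<in>Basis. h b (x \<bullet> b))"
    for x :: "complex^'i"
  proof -
    have "(norm x)\<^sup>2 = x \<bullet> x" by (simp add: power2_norm_eq_inner)
    also have "\<dots> = (\<Sum>b\<in>Basis. (x \<bullet> b)\<^sup>2)"
      by (subst euclidean_inner) (simp add: power2_eq_square)
    finally have "(norm x)\<^sup>2 = (\<Sum>b\<in>Basis. (x \<bullet> b)\<^sup>2)" .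
    then have "exp (- (norm x)\<^sup>2) = (\<Prod>b\<in>Basis. exp (- (x \<bullet> b)\<^sup>2))"
      by (simp add: exp_sum[symmetric] sum_negf)
    then show ?thesis
      by (simp add: h_def prod_ennreal ennreal_mult'[symmetric] divide_simps)
  qed
  have "emeasure (std_cgauss :: (complex^'i) measure) (space std_cgauss) = (\<integral>\<^sup>+x. ennreal (exp (- (norm x)\<^sup>2) / pi ^ CARD('i)) \<partial>(lborel :: (complex^'i) measure))"
    unfolding std_cgauss_def by (simp add: emeasure_density)
  also have "\<dots> = ennreal (1 / pi ^ CARD('i)) * (\<integral>\<^sup>+x. (\<Prod>b\<in>Basis. h b (x \<bullet> b)) \<partial>(lborel :: (complex^'i) measure))"
    unfolding eq by (rule nn_integral_cmult) (simp add: h_def)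
  also have "(\<integral>\<^sup>+x. (\<Prod>b\<in>Basis. h b (x \<bullet> b)) \<partial>(lborel :: (complex^'i) measure)) = (\<Prod>b\<in>Basis. (\<integral>\<^sup>+t. h b t \<partial>lborel))"
    by (rule nn_integral_lborel_prod) (simp_all add: h_def)
  finally have E: "emeasure (std_cgauss :: (complex^'i) measure) (space std_cgauss) = ennreal (1 / pi ^ CARD('i)) * (\<Prod>b\<in>Basis. (\<integral>\<^sup>+t. h b t \<partial>lborel))" .
  have P: "(\<Prod>b\<in>(Basis :: (complex^'i) set). (\<integral>\<^sup>+t. h b t \<partial>lborel)) \<noteq> \<infinity>"
    using fin1 by (auto simp: ennreal_prod_eq_top less_top)
  show "emeasure (std_cgauss :: (complex^'i) measure) (space std_cgauss) \<noteq> \<infinity>"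
    unfolding E using P by (simp add: ennreal_mult_eq_top_iff)
qed

(* ---- part P6 ---- *)
lemma mv_diff_smult: "A *v (x - a *s y) = A *v x - a *s (A *v y)" for A :: "complex^'n::finite^'m::finite"
  by (simp add: vec_eq_iff matrix_vector_mult_def sum_subtractf sum_distrib_left algebra_simps)

lemma mv_smult: "A *v (a *s y) = a *s (A *v y)" for A :: "complex^'n::finite^'m::finite"
  by (simp add: vec_eq_iff matrix_vector_mult_def sum_distrib_left algebra_simps)

lemma cdot_adj: "cdot (mat_H A *v c) z = cdot c (A *v z)"
proof -
  have "cdot (mat_H A *v c) z = (\<Sum>k\<in>UNIV. \<Sum>j\<in>UNIV. A $ j $ k * cnj (c $ j) * z $ k)"
    by (simp add: cdot_def matrix_vector_mult_def mat_H_def sum_distrib_right sum_distrib_left algebra_simps)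
  also have "\<dots> = (\<Sum>j\<in>UNIV. \<Sum>k\<in>UNIV. A $ j $ k * cnj (c $ j) * z $ k)"
    by (rule sum.swap)
  also have "\<dots> = cdot c (A *v z)"
    by (simp add: cdot_def matrix_vector_mult_def sum_distrib_left algebra_simps)
  finally show ?thesis .
qed

lemma cdot_zero_left[simp]: "cdot 0 z = 0"
  by (simp add: cdot_def)

lemma hh_zero[simp]: "hh 0 z = z"
  by (simp add: hh_def)

lemma hh_A:
  assumes AR: "A ** mat_H A = R" and Rc: "R *v c = r *s c"
  shows "hh c (A *v z) = A *v hh (mat_H A *v c) z"
proof -
  define w where "w = mat_H A *v c"
  have Aw: "A *v w = r *s c" unfolding w_def by (simp add: matrix_vector_mul_assoc AR Rc)
  have ww: "cdot w w = r * cdot c c"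
    using cdot_adj[of A c w] by (simp add: w_def[symmetric] Aw cdot_smult_right)
  have wz: "cdot w z = cdot c (A *v z)" unfolding w_def by (rule cdot_adj)
  show ?thesis
  proof (cases "cdot w w = 0")
    case True
    then have "w = 0" by (simp add: cdot_self_eq0)
    then have "cdot c (A *v z) = 0" using wz by simp
    then show ?thesis using \<open>w = 0\<close> by (simp add: hh_def w_def[symmetric])
  next
    case False
    then have r0: "r \<noteq> 0" and c0: "cdot c c \<noteq> 0" using ww by auto
    have "A *v hh w z = A *v z - (2 / cdot w w * cdot w z) *s (r *s c)"
      unfolding hh_def mv_diff_smult Aw ..
    also have "\<dots> = A *v z - (2 / cdot c c * cdot c (A *v z)) *s c"
      using r0 c0 by (simp add: ww wz vector_smult_assoc)
    finally show ?thesis by (simp add: hh_def w_def)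
  qed
qed

lemma meas_mv: "(\<lambda>z. A *v z) \<in> borel_measurable borel" for A :: "complex^'n::finite^'m::finite"
  by (rule meas_lin) simp

lemma meas_hh: "hh c \<in> borel_measurable borel"
  by (rule meas_lin[OF linear_hh])

lemma cgauss_hh:
  fixes R :: "complex^'i::finite^'i"
  assumes ex: "\<exists>A :: complex^'i^'i. A ** mat_H A = R" and Rc: "R *v c = r *s c"
  shows "distr (cgauss R) borel (hh c) = cgauss R"
proof -
  define A :: "complex^'i^'i" where "A = (SOME A. A ** mat_H A = R)"
  have AR: "A ** mat_H A = R" unfolding A_def using ex by (rule someI_ex)
  define w where "w = mat_H A *v c"
  have C: "cgauss R = distr std_cgauss borel (\<lambda>z. A *v z)"
    unfolding cgauss_def A_def ..
  have "distr (cgauss R) borel (hh c) = distr std_cgauss borel (hh c \<circ> (\<lambda>z. A *v z))"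
    unfolding C by (rule distr_distr) (simp_all add: meas_hh meas_std meas_mv)
  also have "hh c \<circ> (\<lambda>z. A *v z) = (\<lambda>z. A *v z) \<circ> hh w"
    using hh_A[OF AR Rc] by (simp add: fun_eq_iff w_def)
  also have "distr std_cgauss borel ((\<lambda>z. A *v z) \<circ> hh w) = distr (distr std_cgauss borel (hh w)) borel (\<lambda>z. A *v z)"
    by (rule distr_distr[symmetric]) (simp_all add: meas_hh meas_std meas_mv)
  also have "\<dots> = cgauss R" by (simp add: std_cgauss_orth[OF orth_hh] C)
  finally show ?thesis .
qed

lemma finite_cgauss: "finite_measure (cgauss R)"
  unfolding cgauss_def
  by (rule finite_measure.finite_measure_distr[OF finite_std_cgauss]) (simp add: meas_std meas_mv)

lemma sets_cgauss[simp]: "sets (cgauss R) = sets borel"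
  by (simp add: cgauss_def)

lemma sets_bg_prior[simp]: "sets (bg_prior e R) = sets borel"
  by (simp add: bg_prior_def)

lemma meas_sel: "(\<lambda>(a, h). if a then h else (0::complex^'i::finite)) \<in> measurable (measure_pmf p \<Otimes>\<^sub>M N) borel"
  if "sets N = sets borel"
proof -
  let ?M = "measure_pmf p \<Otimes>\<^sub>M N"
  have sn: "snd \<in> measurable ?M borel"
    by (rule measurable_compose[OF measurable_snd measurable_ident_sets[OF that]])
  have "fst -` {True} \<inter> space ?M \<in> sets ?M"
    by (rule measurable_sets[OF measurable_fst]) simp
  moreover have "{x \<in> space ?M. fst x} = fst -` {True} \<inter> space ?M" by auto
  ultimately have st: "{x \<in> space ?M. fst x} \<in> sets ?M" by simp
  have "(\<lambda>x. if fst x then snd x else (0::complex^'i)) \<in> measurable ?M borel"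
    by (rule measurable_If[OF sn _ st]) simp
  then show ?thesis by (simp add: split_beta')
qed

lemma bg_prior_inv:
  assumes T: "T \<in> borel_measurable borel" and T0: "T 0 = 0"
    and CT: "distr (cgauss R) borel T = cgauss R"
  shows "distr (bg_prior e R) borel T = bg_prior e R"
proof -
  let ?B = "measure_pmf (bernoulli_pmf e)" and ?C = "cgauss R"
  let ?sel = "(\<lambda>(a, h). if a then h else (0::complex^'i::finite))"
  let ?m = "(\<lambda>x. (fst x, T (snd x)))"
  have TC: "T \<in> measurable ?C borel" using T by (simp add: measurable_cong_sets[OF sets_cgauss refl])
  have mm: "?m \<in> measurable (?B \<Otimes>\<^sub>M ?C) (?B \<Otimes>\<^sub>M borel)"
    by (rule measurable_Pair[OF measurable_fst measurable_compose[OF measurable_snd TC]])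
  have sf: "sigma_finite_measure (distr ?C borel T)"
    unfolding CT using finite_cgauss by (rule finite_measure.axioms(1))
  have P: "distr ?B ?B (\<lambda>x. x) \<Otimes>\<^sub>M distr ?C borel T = distr (?B \<Otimes>\<^sub>M ?C) (?B \<Otimes>\<^sub>M borel) ?m"
    using pair_measure_distr[OF _ TC sf, of "\<lambda>x. x" ?B ?B] by (simp add: split_beta')
  have "distr (bg_prior e R) borel T = distr (?B \<Otimes>\<^sub>M ?C) borel (T \<circ> ?sel)"
    unfolding bg_prior_def by (rule distr_distr) (simp_all add: T meas_sel)
  also have "T \<circ> ?sel = ?sel \<circ> ?m" using T0 by (auto simp: fun_eq_iff)
  also have "distr (?B \<Otimes>\<^sub>M ?C) borel (?sel \<circ> ?m) = distr (distr (?B \<Otimes>\<^sub>M ?C) (?B \<Otimes>\<^sub>M borel) ?m) borel ?sel"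
    by (rule distr_distr[symmetric]) (simp_all add: meas_sel mm)
  also have "\<dots> = bg_prior e R" unfolding P[symmetric] CT by (simp add: bg_prior_def)
  finally show ?thesis .
qed

(* ---- part P7 ---- *)
lemma integral_sym:
  fixes F :: "((complex^'i::finite) \<times> (complex^'i)) \<Rightarrow> complex^'i^'i" and T :: "complex^'i \<Rightarrow> complex^'i"
  assumes M: "distr M borel T = M" "sets M = sets borel"
      and N: "distr N borel T = N" "sets N = sets borel" "finite_measure N"
      and T: "T \<in> borel_measurable borel"
      and F: "F \<in> borel_measurable (borel \<Otimes>\<^sub>M borel)"
      and FT: "\<And>x y. F (T x, T y) = L (F (x, y))"
      and L: "bounded_linear L" "\<And>m. L (L m) = m"
  shows "integral\<^sup>L (M \<Otimes>\<^sub>M N) F = L (integral\<^sup>L (M \<Otimes>\<^sub>M N) F)"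
proof -
  have TM: "T \<in> measurable M borel" using T by (simp add: measurable_cong_sets[OF M(2) refl])
  have TN: "T \<in> measurable N borel" using T by (simp add: measurable_cong_sets[OF N(2) refl])
  have sf: "sigma_finite_measure (distr N borel T)" unfolding N(1) using N(3) by (rule finite_measure.axioms(1))
  let ?TT = "\<lambda>p. (T (fst p), T (snd p))"
  have P: "distr M borel T \<Otimes>\<^sub>M distr N borel T = distr (M \<Otimes>\<^sub>M N) (borel \<Otimes>\<^sub>M borel) (\<lambda>(x, y). (T x, T y))"
    by (rule pair_measure_distr[OF TM TN sf])
  then have P': "M \<Otimes>\<^sub>M N = distr (M \<Otimes>\<^sub>M N) (borel \<Otimes>\<^sub>M borel) ?TT"
    using M N by (simp add: split_beta')
  have TT: "?TT \<in> measurable (M \<Otimes>\<^sub>M N) (borel \<Otimes>\<^sub>M borel)"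
    by (rule measurable_Pair[OF measurable_compose[OF measurable_fst TM] measurable_compose[OF measurable_snd TN]])
  have "integral\<^sup>L (M \<Otimes>\<^sub>M N) F = integral\<^sup>L (distr (M \<Otimes>\<^sub>M N) (borel \<Otimes>\<^sub>M borel) ?TT) F"
    using P' by simp
  also have "\<dots> = integral\<^sup>L (M \<Otimes>\<^sub>M N) (\<lambda>p. F (?TT p))"
    by (rule integral_distr[OF TT F])
  also have "\<dots> = integral\<^sup>L (M \<Otimes>\<^sub>M N) (\<lambda>p. L (F p))"
    using FT by (simp add: split_beta')
  also have "\<dots> = L (integral\<^sup>L (M \<Otimes>\<^sub>M N) F)"
    by (rule integral_bounded_linear'[OF L(1) L(1)]) (simp add: L(2))
  finally show ?thesis .
qed

(* ---- part P8 ---- *)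
lemma bdiag_nth: "bdiag c $ i $ j = (if i = j then c (fst i) else 0)"
  by (simp add: bdiag_def)

lemma sum_if_mult: "(\<Sum>k\<in>(UNIV::'a::finite set). (if i = k then f k else 0) * g k) = f i * (g i :: complex)"
proof -
  have "\<And>k. (if i = k then f k else 0) * g k = (if i = k then f k * g k else 0)" by simp
  then show ?thesis by (simp add: sum.delta)
qed

lemma bdiag_mult: "bdiag a ** bdiag b = (bdiag (\<lambda>k. a k * b k) :: complex^('k::finite \<times> 'm::finite)^('k \<times> 'm))"
  unfolding vec_eq_iff matrix_matrix_mult_def bdiag_nth
  by (simp add: sum_if_mult[where f = "\<lambda>k. a (fst _)"])

lemma bdiag_add: "bdiag a + bdiag b = (bdiag (\<lambda>k. a k + b k) :: complex^('k::finite \<times> 'm::finite)^('k \<times> 'm))"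
  by (simp add: vec_eq_iff bdiag_nth)

lemma bdiag_diff: "bdiag a - bdiag b = (bdiag (\<lambda>k. a k - b k) :: complex^('k::finite \<times> 'm::finite)^('k \<times> 'm))"
  by (simp add: vec_eq_iff bdiag_nth)

lemma bdiag_scaleR: "r *\<^sub>R bdiag a = (bdiag (\<lambda>k. r *\<^sub>R a k) :: complex^('k::finite \<times> 'm::finite)^('k \<times> 'm))"
  by (simp add: vec_eq_iff bdiag_nth)

lemma bdiag_one: "mat 1 = (bdiag (\<lambda>k. 1) :: complex^('k::finite \<times> 'm::finite)^('k \<times> 'm))"
  by (simp add: vec_eq_iff bdiag_nth mat_def)

lemma bdiag_sum: "(\<Sum>n\<in>A. bdiag (a n)) = (bdiag (\<lambda>k. \<Sum>n\<in>A. a n k) :: complex^('k::finite \<times> 'm::finite)^('k \<times> 'm))"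
  unfolding vec_eq_iff
proof (intro allI)
  fix i j :: "'k \<times> 'm"
  show "(\<Sum>n\<in>A. bdiag (a n)) $ i $ j = (bdiag (\<lambda>k. \<Sum>n\<in>A. a n k) :: complex^('k \<times> 'm)^('k \<times> 'm)) $ i $ j"
    by (cases "i = j") (simp_all add: bdiag_nth)
qed

lemma bdiag_mv: "bdiag a *v x = (\<chi> i. a (fst i) * x $ i)"
  unfolding vec_eq_iff matrix_vector_mult_def bdiag_nth
  by (simp add: sum_if_mult[where f = "\<lambda>k. a (fst _)"])

lemma mat_H_bdiag: "mat_H (bdiag a) = bdiag (\<lambda>k. cnj (a k))"
  by (simp add: vec_eq_iff mat_H_def bdiag_nth)

lemma matrix_inv_bdiag:
  assumes "\<And>k. a k \<noteq> 0"
  shows "matrix_inv (bdiag a :: complex^('k::finite \<times> 'm::finite)^('k \<times> 'm)) = bdiag (\<lambda>k. inverse (a k))"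
proof -
  let ?A = "bdiag a :: complex^('k \<times> 'm)^('k \<times> 'm)" and ?B = "bdiag (\<lambda>k. inverse (a k)) :: complex^('k \<times> 'm)^('k \<times> 'm)"
  have AB: "?A ** ?B = mat 1" and BA: "?B ** ?A = mat 1"
    using assms by (simp_all add: bdiag_mult bdiag_one)
  show ?thesis unfolding matrix_inv_def
  proof (rule someI2[of _ ?B])
    show "?A ** ?B = mat 1 \<and> ?B ** ?A = mat 1" using AB BA by simp
  next
    fix X assume "?A ** X = mat 1 \<and> X ** ?A = mat 1"
    then have "X = X ** (?A ** ?B)" "X ** ?A = mat 1" by (simp_all add: AB)
    then show "X = ?B" by (simp add: matrix_mul_assoc)
  qed
qed

lemma bdiag_sqrt: "\<exists>A :: complex^('k::finite \<times> 'm::finite)^('k \<times> 'm). A ** mat_H A = bdiag (\<lambda>k. complex_of_real (r k))"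
  if "\<And>k. r k \<ge> 0"
proof
  show "bdiag (\<lambda>k. complex_of_real (sqrt (r k))) ** mat_H (bdiag (\<lambda>k. complex_of_real (sqrt (r k)))) = bdiag (\<lambda>k. complex_of_real (r k))"
    using that by (simp add: mat_H_bdiag bdiag_mult of_real_mult[symmetric] del: of_real_mult)
qed

(* ---- part P9 ---- *)
definition pv :: "('i \<Rightarrow> complex) \<Rightarrow> ('i \<Rightarrow> 'i) \<Rightarrow> complex^'i::finite \<Rightarrow> complex^'i" where
  "pv s \<sigma> x = (\<chi> a. s a * x $ \<sigma> a)"

definition Lp :: "('i \<Rightarrow> complex) \<Rightarrow> ('i \<Rightarrow> 'i) \<Rightarrow> complex^'i::finite^'i \<Rightarrow> complex^'i^'i" where
  "Lp s \<sigma> M = (\<chi> a b. s a * s b * M $ \<sigma> a $ \<sigma> b)"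

definition good :: "(('k \<times> 'm) \<Rightarrow> complex) \<Rightarrow> (('k \<times> 'm) \<Rightarrow> ('k \<times> 'm)) \<Rightarrow> bool" where
  "good s \<sigma> \<longleftrightarrow> (\<forall>a. fst (\<sigma> a) = fst a) \<and> (\<forall>a. \<sigma> (\<sigma> a) = a) \<and> (\<forall>a. s a = 1 \<or> s a = -1) \<and> (\<forall>a. s (\<sigma> a) = s a)"

lemma good_sq: "good s \<sigma> \<Longrightarrow> s a * s a = 1"
  unfolding good_def by (metis mult_1 mult_minus1 minus_minus)
lemma good_cnj: "good s \<sigma> \<Longrightarrow> cnj (s a) = s a"
  unfolding good_def by (metis complex_cnj_one complex_cnj_minus)

lemma pv_diff: "pv s \<sigma> (x - y) = pv s \<sigma> x - pv s \<sigma> y"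
  by (simp add: pv_def vec_eq_iff algebra_simps)
lemma pv_add: "pv s \<sigma> (x + y) = pv s \<sigma> x + pv s \<sigma> y"
  by (simp add: pv_def vec_eq_iff algebra_simps)
lemma pv_smult: "pv s \<sigma> (c *s y) = c *s pv s \<sigma> y"
  by (simp add: pv_def vec_eq_iff algebra_simps)

lemma outer_pv: "good s \<sigma> \<Longrightarrow> outer (pv s \<sigma> x) = Lp s \<sigma> (outer x)"
  by (simp add: outer_def pv_def Lp_def vec_eq_iff good_cnj algebra_simps)

lemma Lp_Lp: "good s \<sigma> \<Longrightarrow> Lp s \<sigma> (Lp s \<sigma> M) = M"
proof -
  assume g: "good s \<sigma>"
  then have "\<And>a. \<sigma> (\<sigma> a) = a" "\<And>a. s (\<sigma> a) = s a" by (auto simp: good_def)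
  then have "Lp s \<sigma> (Lp s \<sigma> M) = (\<chi> a b. (s a * s a) * (s b * s b) * M $ a $ b)"
    by (simp add: Lp_def vec_eq_iff algebra_simps)
  then show ?thesis using good_sq[OF g] by (simp add: vec_eq_iff)
qed

lemma linear_Lp: "linear (Lp s \<sigma>)"
  by (rule linearI) (simp_all add: Lp_def vec_eq_iff algebra_simps)

lemma bounded_linear_Lp: "bounded_linear (Lp s \<sigma>)"
  using linear_Lp by (simp add: linear_conv_bounded_linear)

lemma bdiag_mv_pv: "good s \<sigma> \<Longrightarrow> bdiag g *v pv s \<sigma> x = pv s \<sigma> (bdiag g *v x)"
  by (simp add: bdiag_mv pv_def vec_eq_iff good_def algebra_simps)

lemma sum_invol: assumes "\<And>a. \<sigma> (\<sigma> a) = a" shows "(\<Sum>a\<in>UNIV. h (\<sigma> a)) = (\<Sum>a\<in>(UNIV::'a::finite set). h a)"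
proof -
  have "inj \<sigma>" by (metis assms injI)
  moreover have "\<sigma> ` UNIV = UNIV" by (metis assms surj_def)
  ultimately show ?thesis using sum.reindex[of \<sigma> UNIV h] by simp
qed

lemma q_pv:
  assumes g: "good s \<sigma>"
  shows "(\<Sum>i\<in>UNIV. cnj (pv s \<sigma> x $ i) * (bdiag w *v pv s \<sigma> x) $ i) = (\<Sum>i\<in>UNIV. cnj (x $ i) * (bdiag w *v x) $ i)"
proof -
  have f: "\<And>a. fst (\<sigma> a) = fst a" and i: "\<And>a. \<sigma> (\<sigma> a) = a" using g by (auto simp: good_def)
  have "(\<Sum>i\<in>UNIV. cnj (pv s \<sigma> x $ i) * (bdiag w *v pv s \<sigma> x) $ i)
      = (\<Sum>a\<in>UNIV. (\<lambda>b. cnj (x $ b) * (w (fst b) * x $ b)) (\<sigma> a))"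
  proof (rule sum.cong[OF refl])
    fix a
    have "cnj (s a) * s a = 1" using good_sq[OF g] good_cnj[OF g] by simp
    then show "cnj (pv s \<sigma> x $ a) * (bdiag w *v pv s \<sigma> x) $ a = (\<lambda>b. cnj (x $ b) * (w (fst b) * x $ b)) (\<sigma> a)"
      by (simp add: pv_def bdiag_mv f)
  qed
  also have "\<dots> = (\<Sum>i\<in>UNIV. cnj (x $ i) * (bdiag w *v x) $ i)"
    by (subst sum_invol[OF i]) (simp add: bdiag_mv)
  finally show ?thesis .
qed

lemma mmse_pv:
  fixes rho tau :: "'k::finite \<Rightarrow> complex"
  assumes g: "good s \<sigma>" and t0: "\<And>k. tau k \<noteq> 0" and rt0: "\<And>k. rho k + tau k \<noteq> 0"
  shows "mmse_den e (bdiag rho :: complex^('k \<times> 'm::finite)^('k \<times> 'm)) (bdiag tau) (pv s \<sigma> x)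
       = pv s \<sigma> (mmse_den e (bdiag rho) (bdiag tau) x)"
proof -
  have I1: "matrix_inv (bdiag tau :: complex^('k \<times> 'm)^('k \<times> 'm)) = bdiag (\<lambda>k. inverse (tau k))"
    using t0 by (rule matrix_inv_bdiag)
  have I2: "matrix_inv (bdiag rho + bdiag tau :: complex^('k \<times> 'm)^('k \<times> 'm)) = bdiag (\<lambda>k. inverse (rho k + tau k))"
    unfolding bdiag_add using rt0 by (rule matrix_inv_bdiag)
  show ?thesis
    unfolding mmse_den_def Let_def I1 I2 bdiag_diff bdiag_mult q_pv[OF g]
    by (simp add: bdiag_mv_pv[OF g] pv_smult)
qed

(* ---- part P10 ---- *)
lemma meas_nth: "f \<in> borel_measurable M \<Longrightarrow> (\<lambda>x. f x $ i) \<in> borel_measurable M"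
  for f :: "'a \<Rightarrow> 'b::euclidean_space^'n::finite"
  by (rule measurable_compose[OF _ meas_lin]) (simp_all add: bounded_linear.linear[OF bounded_linear_vec_nth])

lemma linear_axis: "linear (\<lambda>y::'b::real_vector. axis i y)"
  by (rule linearI) (simp_all add: vec_eq_iff axis_def)

lemma sum_axis: "(\<Sum>i\<in>UNIV. axis i (v $ i)) = (v :: 'b::real_vector^'n::finite)"
proof -
  have "(\<Sum>i\<in>UNIV. axis i (v $ i)) $ a = v $ a" for a
  proof -
    have "(\<Sum>i\<in>UNIV. axis i (v $ i)) $ a = (\<Sum>i\<in>UNIV. if a = i then v $ i else 0)"
      by (simp add: axis_def)
    then show ?thesis by simp
  qed
  then show ?thesis by (simp add: vec_eq_iff)
qed

lemma meas_vecI: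
  fixes f :: "'a \<Rightarrow> 'b::euclidean_space^'n::finite"
  assumes "\<And>i. (\<lambda>x. f x $ i) \<in> borel_measurable M"
  shows "f \<in> borel_measurable M"
proof -
  have "(\<lambda>x. \<Sum>i\<in>UNIV. axis i (f x $ i)) \<in> borel_measurable M"
    by (intro borel_measurable_sum measurable_compose[OF assms meas_lin[OF linear_axis]])
  then show ?thesis by (simp add: sum_axis)
qed

lemma meas_cnj: "f \<in> borel_measurable M \<Longrightarrow> (\<lambda>x. cnj (f x)) \<in> borel_measurable M"
  by (rule measurable_compose[OF _ borel_measurable_continuous_onI]) (simp_all add: continuous_on_cnj[OF continuous_on_id])

lemma cont_nth: "continuous_on S f \<Longrightarrow> continuous_on S (\<lambda>x. f x $ i)"
  for f :: "'a::topological_space \<Rightarrow> 'b::real_normed_vector^'n::finite"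
  by (rule bounded_linear.continuous_on[OF bounded_linear_vec_nth])

lemma meas_mmse: "mmse_den e R S \<in> borel_measurable borel"
proof -
  define Om where "Om = matrix_inv S - matrix_inv (R + S)"
  define K where "K = complex_of_real ((1 - e) / e) * (det (R + S) / det S)"
  define B where "B = R ** matrix_inv (R + S)"
  define D where "D = (\<lambda>xi. 1 + K * exp (- (\<Sum>i\<in>UNIV. cnj (xi $ i) * (Om *v xi) $ i)))"
  have eq: "mmse_den e R S = (\<lambda>xi. \<chi> a. inverse (D xi) * (B *v xi) $ a)"
    unfolding mmse_den_def Let_def D_def Om_def K_def B_def fun_eq_iff vec_eq_iff by simp
  have cOm: "continuous_on UNIV (\<lambda>xi. Om *v xi)"
    by (rule linear_continuous_on) (rule linear_conv_bounded_linear[THEN iffD1], simp)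
  have cB: "continuous_on UNIV (\<lambda>xi. B *v xi)"
    by (rule linear_continuous_on) (rule linear_conv_bounded_linear[THEN iffD1], simp)
  have cD: "continuous_on UNIV D"
  proof -
    have c1: "continuous_on UNIV (\<lambda>xi::complex^_. xi $ i)" for i by (rule cont_nth[OF continuous_on_id])
    have c2: "continuous_on UNIV (\<lambda>xi. (Om *v xi) $ i)" for i by (rule cont_nth[OF cOm])
    have c3: "continuous_on UNIV (\<lambda>xi. \<Sum>i\<in>UNIV. cnj (xi $ i) * (Om *v xi) $ i)"
      by (intro continuous_on_sum continuous_on_mult continuous_on_cnj c1 c2)
    show ?thesis unfolding D_def
      by (intro continuous_on_add continuous_on_const continuous_on_mult continuous_on_exp continuous_on_minus c3)
  qed
  have mD: "D \<in> borel_measurable borel" by (rule borel_measurable_continuous_onI[OF cD])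
  have mB: "(\<lambda>xi. (B *v xi) $ a) \<in> borel_measurable borel" for a
    by (rule borel_measurable_continuous_onI) (intro cont_nth cB)
  show ?thesis unfolding eq
    by (rule meas_vecI) (simp add: borel_measurable_times borel_measurable_inverse mD mB)
qed

lemma meas_F: fixes R S :: "complex^'i::finite^'i" shows "(\<lambda>p. outer (mmse_den e R S (fst p + snd p) - fst p)) \<in> borel_measurable (borel \<Otimes>\<^sub>M borel)"
proof -
  let ?g = "\<lambda>p::(complex^'i::finite) \<times> (complex^'i). mmse_den e R S (fst p + snd p) - fst p"
  have pl: "(\<lambda>p::(complex^'i) \<times> (complex^'i). fst p + snd p) \<in> borel_measurable borel"
    by (rule borel_measurable_continuous_onI)
       (rule continuous_on_add[OF continuous_on_fst[OF continuous_on_id] continuous_on_snd[OF continuous_on_id]])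
  have fm: "(\<lambda>p::(complex^'i) \<times> (complex^'i). fst p) \<in> borel_measurable borel"
    by (rule borel_measurable_continuous_onI) (rule continuous_on_fst[OF continuous_on_id])
  have mg: "?g \<in> borel_measurable borel"
    by (rule borel_measurable_diff[OF measurable_compose[OF pl meas_mmse] fm])
  have "(\<lambda>p. outer (?g p)) \<in> borel_measurable borel"
    unfolding outer_def
    by (intro meas_vecI) (simp only: vec_lambda_beta, rule borel_measurable_times[OF meas_nth[OF mg] meas_cnj[OF meas_nth[OF mg]]])
  then show ?thesis by (simp add: borel_prod)
qed

definition sflip :: "'i \<Rightarrow> 'i \<Rightarrow> complex" where "sflip i a = (if a = i then -1 else 1)"
definition sw :: "'i \<Rightarrow> 'i \<Rightarrow> 'i \<Rightarrow> 'i" where "sw i j a = (if a = i then j else if a = j then i else a)"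
lemma good_swap: assumes "fst i = fst j" shows "good (\<lambda>_. 1) (sw i j)"
  unfolding good_def
proof (intro conjI allI)
  fix a show "fst (sw i j a) = fst a" unfolding sw_def using assms by (cases "a = i"; cases "a = j") simp_all
next
  fix a show "sw i j (sw i j a) = a" unfolding sw_def by (cases "a = i"; cases "a = j") simp_all
qed simp_all
lemma cdot_axis: "cdot (axis i 1) x = x $ i"
proof -
  have "cdot (axis i 1) x = (\<Sum>k\<in>UNIV. if i = k then x $ k else 0)"
    unfolding cdot_def by (rule sum.cong) (simp_all add: axis_def)
  then show ?thesis by simp
qed
lemma hh_flip: "pv (sflip i) id = hh (axis i 1)" for i :: "'i::finite"
proof
  fix x :: "complex^'i"
  have "pv (sflip i) id x $ a = hh (axis i 1) x $ a" for a
    unfolding hh_def cdot_axis axis_nth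
    by (cases "a = i") (simp_all add: pv_def sflip_def axis_def)
  then show "pv (sflip i) id x = hh (axis i 1) x" by (simp add: vec_eq_iff)
qed

lemma hh_swap: fixes i j :: "'i::finite" assumes "i \<noteq> j" shows "pv (\<lambda>_. 1) (sw i j) = hh (axis i 1 - axis j 1)"
proof
  fix x :: "complex^'i"
  have c: "cdot (axis i 1 - axis j 1) (axis i 1 - axis j 1) = 2"
    unfolding cdot_diff_left cdot_axis using assms by (simp add: axis_def)
  have "pv (\<lambda>_. 1) (sw i j) x $ a = hh (axis i 1 - axis j 1) x $ a" for a
    unfolding hh_def c unfolding cdot_diff_left cdot_axis
    using assms by (cases "a = i"; cases "a = j") (simp_all add: pv_def sw_def axis_def)
  then show "pv (\<lambda>_. 1) (sw i j) x = hh (axis i 1 - axis j 1) x" by (simp add: vec_eq_iff)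
qed

lemma eig_flip: "bdiag d *v axis i 1 = d (fst i) *s axis i 1"
proof -
  have "(bdiag d *v axis i 1) $ a = (d (fst i) *s axis i 1) $ a" for a
    by (cases "a = i") (simp_all add: bdiag_mv axis_def)
  then show ?thesis by (simp add: vec_eq_iff)
qed

lemma eig_swap: assumes "fst i = fst j" shows "bdiag d *v (axis i 1 - axis j 1) = d (fst i) *s (axis i 1 - axis j 1)"
proof -
  have "(bdiag d *v (axis i 1 - axis j 1)) $ a = (d (fst i) *s (axis i 1 - axis j 1)) $ a" for a
    using assms by (cases "a = i"; cases "a = j") (simp_all add: bdiag_mv axis_def)
  then show ?thesis by (simp add: vec_eq_iff)
qed

(* ---- part P11 ---- *)
lemma sym_step:
  fixes rho tau :: "'k::finite \<Rightarrow> complex" and e :: real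
  assumes g: "good s \<sigma>" and T: "pv s \<sigma> = hh c"
    and t0: "\<And>k. tau k \<noteq> 0" and rt0: "\<And>k. rho k + tau k \<noteq> 0"
    and exR: "\<exists>A :: complex^('k \<times> 'm::finite)^('k \<times> 'm). A ** mat_H A = bdiag rho"
    and exS: "\<exists>A :: complex^('k \<times> 'm)^('k \<times> 'm). A ** mat_H A = bdiag tau"
    and Rc: "(bdiag rho :: complex^('k \<times> 'm)^('k \<times> 'm)) *v c = r1 *s c"
    and Sc: "(bdiag tau :: complex^('k \<times> 'm)^('k \<times> 'm)) *v c = r2 *s c"
  defines "F \<equiv> (\<lambda>p. outer (mmse_den e (bdiag rho :: complex^('k \<times> 'm)^('k \<times> 'm)) (bdiag tau) (fst p + snd p) - fst p))"
  shows "integral\<^sup>L (bg_prior e (bdiag rho) \<Otimes>\<^sub>M cgauss (bdiag tau)) F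
       = Lp s \<sigma> (integral\<^sup>L (bg_prior e (bdiag rho) \<Otimes>\<^sub>M cgauss (bdiag tau)) F)"
proof (rule integral_sym)
  have Tm: "pv s \<sigma> \<in> borel_measurable borel" unfolding T by (rule meas_hh)
  show "pv s \<sigma> \<in> borel_measurable borel" by (rule Tm)
  have CR: "distr (cgauss (bdiag rho)) borel (pv s \<sigma>) = cgauss (bdiag rho :: complex^('k \<times> 'm)^('k \<times> 'm))"
    unfolding T by (rule cgauss_hh[OF exR Rc])
  show "distr (cgauss (bdiag tau)) borel (pv s \<sigma>) = cgauss (bdiag tau :: complex^('k \<times> 'm)^('k \<times> 'm))"
    unfolding T by (rule cgauss_hh[OF exS Sc])
  show "distr (bg_prior e (bdiag rho)) borel (pv s \<sigma>) = bg_prior e (bdiag rho :: complex^('k \<times> 'm)^('k \<times> 'm))"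
    by (rule bg_prior_inv[OF Tm _ CR]) (simp add: pv_def vec_eq_iff)
  show "finite_measure (cgauss (bdiag tau :: complex^('k \<times> 'm)^('k \<times> 'm)))" by (rule finite_cgauss)
  show "F \<in> borel_measurable (borel \<Otimes>\<^sub>M borel)" unfolding F_def by (rule meas_F)
  show "F (pv s \<sigma> x, pv s \<sigma> y) = Lp s \<sigma> (F (x, y))" for x y
    unfolding F_def using g
    by (simp add: pv_add[symmetric] mmse_pv[OF g t0 rt0] pv_diff[symmetric] outer_pv)
  show "bounded_linear (Lp s \<sigma>)" by (rule bounded_linear_Lp)
  show "Lp s \<sigma> (Lp s \<sigma> m) = m" for m using g by (rule Lp_Lp)
qed simp_all

(* ---- part P12 ---- *)
lemma good_flip: "good (sflip i) id"
  by (simp add: good_def sflip_def)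

lemma E_bdiag:
  fixes rho tau :: "'k::finite \<Rightarrow> real" and e :: real
  assumes r0: "\<And>k. rho k \<ge> 0" and t0: "\<And>k. tau k > 0"
  shows "\<exists>ee. (\<forall>k. ee k \<ge> 0) \<and>
    integral\<^sup>L (bg_prior e (bdiag (\<lambda>k. complex_of_real (rho k))) \<Otimes>\<^sub>M cgauss (bdiag (\<lambda>k. complex_of_real (tau k))))
      (\<lambda>p. outer (mmse_den e (bdiag (\<lambda>k. complex_of_real (rho k)) :: complex^('k \<times> 'm::finite)^('k \<times> 'm))
                   (bdiag (\<lambda>k. complex_of_real (tau k))) (fst p + snd p) - fst p))
    = bdiag (\<lambda>k. complex_of_real (ee k))"
proof -
  let ?r = "\<lambda>k. complex_of_real (rho k)" and ?t = "\<lambda>k. complex_of_real (tau k)"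
  let ?mu = "bg_prior e (bdiag ?r) \<Otimes>\<^sub>M cgauss (bdiag ?t :: complex^('k \<times> 'm)^('k \<times> 'm))"
  define F where "F = (\<lambda>p. outer (mmse_den e (bdiag ?r :: complex^('k \<times> 'm)^('k \<times> 'm)) (bdiag ?t) (fst p + snd p) - fst p))"
  define E where "E = integral\<^sup>L ?mu F"
  have t0': "\<And>k. ?t k \<noteq> 0" using t0 by (simp add: less_imp_neq[symmetric])
  have rt0': "\<And>k. ?r k + ?t k \<noteq> 0"
  proof -
    fix k have "rho k + tau k > 0" using r0[of k] t0[of k] by simp
    then show "?r k + ?t k \<noteq> 0" by (metis of_real_add of_real_eq_0_iff less_irrefl)
  qed
  have exR: "\<exists>A :: complex^('k \<times> 'm)^('k \<times> 'm). A ** mat_H A = bdiag ?r" by (rule bdiag_sqrt) (rule r0)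
  have exS: "\<exists>A :: complex^('k \<times> 'm)^('k \<times> 'm). A ** mat_H A = bdiag ?t" by (rule bdiag_sqrt) (simp add: less_imp_le t0)
  have flipE: "E = Lp (sflip i) id E" for i
    unfolding E_def F_def by (rule sym_step[OF good_flip hh_flip t0' rt0' exR exS eig_flip eig_flip])
  have swapE: "E = Lp (\<lambda>_. 1) (sw i j) E" if "i \<noteq> j" "fst i = fst j" for i j
    unfolding E_def F_def
    by (rule sym_step[OF good_swap[OF that(2)] hh_swap[OF that(1)] t0' rt0' exR exS eig_swap[OF that(2)] eig_swap[OF that(2)]])
  have off: "E $ a $ b = 0" if "a \<noteq> b" for a b
  proof -
    have "E $ a $ b = (Lp (sflip a) id E) $ a $ b" using flipE[of a] by simp
    also have "\<dots> = - E $ a $ b" using that by (simp add: Lp_def sflip_def)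
    finally show ?thesis by simp
  qed
  have same: "E $ a $ a = E $ b $ b" if "fst a = fst b" for a b
  proof (cases "a = b")
    case False
    have "E $ a $ a = (Lp (\<lambda>_. 1) (sw a b) E) $ a $ a" using swapE[OF False that] by simp
    also have "\<dots> = E $ b $ b" by (simp add: Lp_def sw_def)
    finally show ?thesis .
  qed simp
  have diag: "\<exists>x. x \<ge> 0 \<and> E $ a $ a = complex_of_real x" for a
  proof (cases "integrable ?mu F")
    case True
    have bl: "bounded_linear (\<lambda>M :: complex^('k \<times> 'm)^('k \<times> 'm). M $ a $ a)"
      by (rule bounded_linear_compose[OF bounded_linear_vec_nth bounded_linear_vec_nth])
    have "E $ a $ a = integral\<^sup>L ?mu (\<lambda>p. F p $ a $ a)"
      unfolding E_def by (rule integral_bounded_linear[OF bl True, symmetric])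
    also have "(\<lambda>p. F p $ a $ a) = (\<lambda>p. complex_of_real ((cmod ((mmse_den e (bdiag ?r :: complex^('k \<times> 'm)^('k \<times> 'm)) (bdiag ?t) (fst p + snd p) - fst p) $ a))\<^sup>2))"
    proof -
      have sq: "\<And>z. z * cnj z = complex_of_real ((cmod z)\<^sup>2)" by (metis complex_norm_square)
      show ?thesis unfolding F_def outer_def vec_lambda_beta sq ..
    qed
    also have "integral\<^sup>L ?mu (\<lambda>p. complex_of_real ((cmod ((mmse_den e (bdiag ?r :: complex^('k \<times> 'm)^('k \<times> 'm)) (bdiag ?t) (fst p + snd p) - fst p) $ a))\<^sup>2))
       = complex_of_real (integral\<^sup>L ?mu (\<lambda>p. (cmod ((mmse_den e (bdiag ?r :: complex^('k \<times> 'm)^('k \<times> 'm)) (bdiag ?t) (fst p + snd p) - fst p) $ a))\<^sup>2))"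
      by (rule integral_complex_of_real)
    finally have "E $ a $ a = complex_of_real (integral\<^sup>L ?mu (\<lambda>p. (cmod ((mmse_den e (bdiag ?r :: complex^('k \<times> 'm)^('k \<times> 'm)) (bdiag ?t) (fst p + snd p) - fst p) $ a))\<^sup>2))" .
    moreover have "integral\<^sup>L ?mu (\<lambda>p. (cmod ((mmse_den e (bdiag ?r :: complex^('k \<times> 'm)^('k \<times> 'm)) (bdiag ?t) (fst p + snd p) - fst p) $ a))\<^sup>2) \<ge> 0"
      by simp
    ultimately show ?thesis by blast
  next
    case False
    then have "E = 0" unfolding E_def by (rule not_integrable_integral_eq)
    then show ?thesis by (intro exI[of _ 0]) simp
  qed
  then obtain x where x: "\<And>a. x a \<ge> 0 \<and> E $ a $ a = complex_of_real (x a)" by metis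
  define ee where "ee = (\<lambda>k. x (k, undefined :: 'm))"
  have "E = bdiag (\<lambda>k. complex_of_real (ee k))"
  proof -
    have "E $ a $ b = bdiag (\<lambda>k. complex_of_real (ee k)) $ a $ b" for a b
    proof (cases "a = b")
      case True
      have "E $ a $ a = E $ (fst a, undefined) $ (fst a, undefined)" by (rule same) simp
      then show ?thesis using True x[of "(fst a, undefined)"] by (simp add: bdiag_nth ee_def)
    next
      case False then show ?thesis by (simp add: bdiag_nth off)
    qed
    then show ?thesis by (simp add: vec_eq_iff)
  qed
  moreover have "\<forall>k. ee k \<ge> 0" using x by (simp add: ee_def)
  ultimately show ?thesis unfolding E_def F_def by blast
qed

(* ---- part P13 ---- *)
lemma bdiag_cong_real: assumes "\<And>k. a k = complex_of_real (b k)" shows "bdiag a = bdiag (\<lambda>k. complex_of_real (b k))"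
proof -
  have "a = (\<lambda>k. complex_of_real (b k))" by (rule ext) (rule assms)
  then show ?thesis by simp
qed

theorem corollary1:
  fixes rho :: "'k::finite \<Rightarrow> nat \<Rightarrow> real" and eps :: "nat \<Rightarrow> real"
    and s2 :: real and N L :: nat
  assumes "N \<ge> 1" and "L \<ge> 1" and "s2 > 0"
    and "\<forall>n\<in>{1..N}. 0 < eps n \<and> eps n < 1"
    and "\<forall>k. \<forall>n\<in>{1..N}. rho k n \<ge> 0"
  shows "\<forall>t. \<exists>tau :: 'k \<Rightarrow> real.
           SE s2 L N eps
              (\<lambda>n. (bdiag (\<lambda>k. complex_of_real (rho k n)) :: complex^('k \<times> 'm::finite)^('k \<times> 'm))) t
           = bdiag (\<lambda>k. complex_of_real (tau k))"
proof
  fix t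
  let ?R = "(\<lambda>n. (bdiag (\<lambda>k. complex_of_real (rho k n)) :: complex^('k \<times> 'm::finite)^('k \<times> 'm)))"
  have rho0: "\<And>k n. n \<in> {1..N} \<Longrightarrow> rho k n \<ge> 0" using assms(5) by blast
  have "\<exists>tau :: 'k \<Rightarrow> real. (\<forall>k. tau k > 0) \<and> SE s2 L N eps ?R t = bdiag (\<lambda>k. complex_of_real (tau k))"
  proof (induction t)
    case 0
    have "SE s2 L N eps ?R 0 = bdiag (\<lambda>k. s2 *\<^sub>R 1 + (1 / real L) *\<^sub>R (\<Sum>n\<in>{1..N}. complex_of_real (rho k n)))"
      by (simp only: SE.simps Let_def bdiag_one bdiag_scaleR bdiag_sum bdiag_add)
    also have "\<dots> = bdiag (\<lambda>k. complex_of_real (s2 + (1 / real L) * (\<Sum>n\<in>{1..N}. rho k n)))"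
      by (rule bdiag_cong_real) (simp add: scaleR_conv_of_real)
    finally have eq: "SE s2 L N eps ?R 0 = bdiag (\<lambda>k. complex_of_real (s2 + (1 / real L) * (\<Sum>n\<in>{1..N}. rho k n)))" .
    have pos: "s2 + (1 / real L) * (\<Sum>n\<in>{1..N}. rho k n) > 0" for k
    proof -
      have "(\<Sum>n\<in>{1..N}. rho k n) \<ge> 0" by (rule sum_nonneg) (rule rho0)
      then have "(1 / real L) * (\<Sum>n\<in>{1..N}. rho k n) \<ge> 0" by simp
      then show ?thesis using assms(3) by linarith
    qed
    show ?case using eq pos by (intro exI[of _ "\<lambda>k. s2 + (1 / real L) * (\<Sum>n\<in>{1..N}. rho k n)"]) simp
  next
    case (Suc t)
    then obtain tau where tau0: "\<And>k. tau k > 0" and St: "SE s2 L N eps ?R t = bdiag (\<lambda>k. complex_of_real (tau k))"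
      by blast
    have "\<forall>n\<in>{1..N}. \<exists>ee. (\<forall>k. ee k \<ge> 0) \<and>
      integral\<^sup>L (bg_prior (eps n) (?R n) \<Otimes>\<^sub>M cgauss (bdiag (\<lambda>k. complex_of_real (tau k))))
        (\<lambda>p. outer (mmse_den (eps n) (?R n) (bdiag (\<lambda>k. complex_of_real (tau k))) (fst p + snd p) - fst p))
      = bdiag (\<lambda>k. complex_of_real (ee k))"
    proof
      fix n assume n: "n \<in> {1..N}"
      show "\<exists>ee. (\<forall>k. ee k \<ge> 0) \<and>
      integral\<^sup>L (bg_prior (eps n) (?R n) \<Otimes>\<^sub>M cgauss (bdiag (\<lambda>k. complex_of_real (tau k))))
        (\<lambda>p. outer (mmse_den (eps n) (?R n) (bdiag (\<lambda>k. complex_of_real (tau k))) (fst p + snd p) - fst p))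
      = bdiag (\<lambda>k. complex_of_real (ee k))"
        by (rule E_bdiag[where rho = "\<lambda>k. rho k n"]) (simp_all add: rho0[OF n] tau0)
    qed
    from bchoice[OF this] obtain f where f: "\<forall>n\<in>{1..N}. (\<forall>k. f n k \<ge> 0) \<and>
      integral\<^sup>L (bg_prior (eps n) (?R n) \<Otimes>\<^sub>M cgauss (bdiag (\<lambda>k. complex_of_real (tau k))))
        (\<lambda>p. outer (mmse_den (eps n) (?R n) (bdiag (\<lambda>k. complex_of_real (tau k))) (fst p + snd p) - fst p))
      = bdiag (\<lambda>k. complex_of_real (f n k))"
      by blast
    have sumeq: "(\<Sum>n\<in>{1..N}.
        integral\<^sup>L (bg_prior (eps n) (?R n) \<Otimes>\<^sub>M cgauss (bdiag (\<lambda>k. complex_of_real (tau k))))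
        (\<lambda>p. outer (mmse_den (eps n) (?R n) (bdiag (\<lambda>k. complex_of_real (tau k))) (fst p + snd p) - fst p)))
      = (\<Sum>n\<in>{1..N}. bdiag (\<lambda>k. complex_of_real (f n k)))"
      by (rule sum.cong[OF refl]) (use f in simp)
    have "SE s2 L N eps ?R (Suc t) = s2 *\<^sub>R mat 1 + (1 / real L) *\<^sub>R (\<Sum>n\<in>{1..N}. bdiag (\<lambda>k. complex_of_real (f n k)))"
      by (simp only: SE.simps Let_def St sumeq)
    also have "\<dots> = bdiag (\<lambda>k. s2 *\<^sub>R 1 + (1 / real L) *\<^sub>R (\<Sum>n\<in>{1..N}. complex_of_real (f n k)))"
      by (simp only: SE.simps Let_def bdiag_one bdiag_scaleR bdiag_sum bdiag_add)
    also have "\<dots> = bdiag (\<lambda>k. complex_of_real (s2 + (1 / real L) * (\<Sum>n\<in>{1..N}. f n k)))"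
      by (rule bdiag_cong_real) (simp add: scaleR_conv_of_real)
    finally have eq: "SE s2 L N eps ?R (Suc t) = bdiag (\<lambda>k. complex_of_real (s2 + (1 / real L) * (\<Sum>n\<in>{1..N}. f n k)))" .
    have pos: "s2 + (1 / real L) * (\<Sum>n\<in>{1..N}. f n k) > 0" for k
    proof -
      have "(\<Sum>n\<in>{1..N}. f n k) \<ge> 0" by (rule sum_nonneg) (use f in simp)
      then have "(1 / real L) * (\<Sum>n\<in>{1..N}. f n k) \<ge> 0" by simp
      then show ?thesis using assms(3) by linarith
    qed
    show ?case using eq pos by (intro exI[of _ "\<lambda>k. s2 + (1 / real L) * (\<Sum>n\<in>{1..N}. f n k)"]) simp
  qed
  then show "\<exists>tau :: 'k \<Rightarrow> real. SE s2 L N eps ?R t = bdiag (\<lambda>k. complex_of_real (tau k))" by blast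
qed

end
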